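(* Let $\mu,\sigma,r,c_s>0$ and $\theta\in\mathbb{R}$ be constants. Define \[F(x)=\int_0^\infty u^{\frac{r}{\mu}-1}e^{\sqrt{\frac{2\mu}{\sigma^2}}(x-\theta)u-\frac{u^2}{2}}\,du,\qquad G(x)=\int_0^\infty u^{\frac{r}{\mu}-1}e^{\sqrt{\frac{2\mu}{\sigma^2}}(\theta-x)u-\frac{u^2}{2}}\,du,\] $\psi(x)=F(x)/G(x)$ (a strictly increasing bijection from $\mathbb{R}$ onto $(0,\infty)$), $h_s(x)=e^x-c_s$, and \[H(z)=\begin{cases}\dfrac{h_s}{G}\circ\psi^{-1}(z), & z>0,\\[1mm] \lim_{x\to-\infty}\dfrac{(h_s(x))^+}{G(x)}, & z=0.\end{cases}\] Let $x_s$ be the unique root of $f_s(x)=(\mu\theta+\frac12\sigma^2-r)-\mu x+rc_se^{-x}$. Then $H$ is continuous on $[0,+\infty)$, twice differentiable on $(0,+\infty)$, and: (i) $H(0)=0$, $H(z)<0$ for $z\in(0,\psi(\ln c_s))$ and $H(z)>0$ for $z\in(\psi(\ln c_s),+\infty)$; (ii) $H$ is strictly increasing on $(\psi(\ln c_s),+\infty)$, and $H'(z)\to0$ as $z\to+\infty$; (iii) $H$ is convex on $(0,\psi(x_s)]$ and concave on $[\psi(x_s),+\infty)$.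
   Context: $F$ and $G$ are the positive increasing and decreasing solutions of $\frac{\sigma^2}{2}u''+\mu(\theta-x)u'=ru$ (the generator of the OU process $dX_t=\mu(\theta-X_t)dt+\sigma dB_t$). *)

theory Defs
  imports "HOL-Analysis.Analysis"
begin

definition OU_F :: "real \<Rightarrow> real \<Rightarrow> real \<Rightarrow> real \<Rightarrow> real \<Rightarrow> real" where
  "OU_F mu sig theta r x =
     (LBINT u:{0<..}. u powr (r / mu - 1) *
        exp (sqrt (2 * mu / sig^2) * (x - theta) * u - u^2 / 2))"

definition OU_G :: "real \<Rightarrow> real \<Rightarrow> real \<Rightarrow> real \<Rightarrow> real \<Rightarrow> real" where
  "OU_G mu sig theta r x =
     (LBINT u:{0<..}. u powr (r / mu - 1) *
        exp (sqrt (2 * mu / sig^2) * (theta - x) * u - u^2 / 2))"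

definition OU_psi :: "real \<Rightarrow> real \<Rightarrow> real \<Rightarrow> real \<Rightarrow> real \<Rightarrow> real" where
  "OU_psi mu sig theta r x = OU_F mu sig theta r x / OU_G mu sig theta r x"

definition h_s :: "real \<Rightarrow> real \<Rightarrow> real" where
  "h_s c x = exp x - c"

definition OU_H :: "real \<Rightarrow> real \<Rightarrow> real \<Rightarrow> real \<Rightarrow> real \<Rightarrow> real \<Rightarrow> real" where
  "OU_H mu sig theta r c z =
     (if z > 0 then
        (let x = inv (OU_psi mu sig theta r) z in h_s c x / OU_G mu sig theta r x)
      else Lim at_bot (\<lambda>x. max 0 (h_s c x) / OU_G mu sig theta r x))"

definition f_s :: "real \<Rightarrow> real \<Rightarrow> real \<Rightarrow> real \<Rightarrow> real \<Rightarrow> real \<Rightarrow> real" where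
  "f_s mu sig theta r c x = (mu * theta + sig^2 / 2 - r) - mu * x + r * c * exp (- x)"

definition x_s :: "real \<Rightarrow> real \<Rightarrow> real \<Rightarrow> real \<Rightarrow> real \<Rightarrow> real" where
  "x_s mu sig theta r c = (THE x. f_s mu sig theta r c x = 0)"

end

theory Submission
  imports Defs "HOL-Real_Asymp.Real_Asymp"
begin

definition gI :: "real \<Rightarrow> real \<Rightarrow> real" where
  "gI a y = (LBINT u:{0<..}. u powr a * exp (y*u - u^2/2))"

lemma gamma_set_integrable:
  assumes "a > -1"
  shows "set_integrable lborel {0<..} (\<lambda>u::real. u powr a / exp u)"
proof -
  have "((\<lambda>t. t powr ((a+1) - 1) / exp t) has_integral Gamma (a+1)) {0..}"
    using Gamma_integral_real[of "a+1"] assms by simp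
  hence "(\<lambda>t. t powr a / exp t) integrable_on {0..}" by (auto simp: has_integral_integrable)
  hence "(\<lambda>t. t powr a / exp t) absolutely_integrable_on {0..}"
    by (rule nonnegative_absolutely_integrable_1) auto
  hence "set_integrable lebesgue {0..} (\<lambda>t::real. t powr a / exp t)"
    by (simp add: absolutely_integrable_on_def)
  hence "set_integrable lebesgue {0<..} (\<lambda>t::real. t powr a / exp t)"
    by (rule set_integrable_subset) auto
  thus ?thesis unfolding set_integrable_def
    by (subst (asm) integrable_completion) (auto intro!: borel_measurable_continuous_on_indicator continuous_intros)
qed

lemma meas_P: "set_borel_measurable lborel {0<..} (\<lambda>u::real. u powr a * exp (y*u - u^2/2))"
  unfolding set_borel_measurable_def
  by (auto intro!: borel_measurable_continuous_on_indicator continuous_intros)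

lemma gI_integrable:
  assumes "a > -1"
  shows "set_integrable lborel {0<..} (\<lambda>u::real. u powr a * exp (y*u - u^2/2))"
proof (rule set_integrable_bound[OF set_integrable_mult_right[OF gamma_set_integrable[OF assms]] meas_P])
  show "AE x in lborel. x \<in> {0<..} \<longrightarrow>
      norm (x powr a * exp (y * x - x\<^sup>2 / 2)) \<le> norm (exp ((y+1)^2/2) * (x powr a / exp x))"
  proof (rule AE_I2, intro impI)
    fix x :: real assume "x \<in> {0<..}"
    have "exp (y * x - x\<^sup>2 / 2) * exp x \<le> exp ((y+1)^2/2)"
    proof -
      have "y * x - x\<^sup>2 / 2 + x \<le> (y+1)^2/2"
        using sum_squares_ge_zero[of "x - (y+1)" 0] by (simp add: power2_eq_square algebra_simps)
      thus ?thesis by (simp add: exp_add[symmetric])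
    qed
    hence "exp (y * x - x\<^sup>2 / 2) \<le> exp ((y+1)^2/2) / exp x" by (simp add: field_simps)
    hence "x powr a * exp (y * x - x\<^sup>2 / 2) \<le> x powr a * (exp ((y+1)^2/2) / exp x)"
      by (intro mult_left_mono) auto
    thus "norm (x powr a * exp (y * x - x\<^sup>2 / 2)) \<le> norm (exp ((y+1)^2/2) * (x powr a / exp x))"
      by (simp add: mult.commute)
  qed
qed

lemma exp_taylor2_bound: "\<bar>exp (t::real) - 1 - t\<bar> \<le> t^2 * exp \<bar>t\<bar>"
proof -
  have a: "exp t \<ge> 1 + t" "exp (-t) \<ge> 1 - t" using exp_ge_add_one_self[of t] exp_ge_add_one_self[of "-t"] by auto
  have nn: "exp t - 1 - t \<ge> 0" using a(1) by linarith
  have up: "exp t - 1 - t \<le> t * (exp t - 1)"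
  proof -
    have "exp t * (1 - t) \<le> exp t * exp (-t)" using a(2) by (intro mult_left_mono) auto
    also have "\<dots> = 1" by (simp add: exp_minus)
    finally show ?thesis by (simp add: algebra_simps)
  qed
  have up2: "t * (exp t - 1) \<le> t^2 * exp \<bar>t\<bar>"
  proof (cases "t \<ge> 0")
    case True
    have "exp t - 1 \<le> t * exp t"
    proof -
      have "exp t * (1 - t) \<le> 1" using up a by (smt (verit) mult_left_mono exp_gt_zero exp_minus_inverse)
      thus ?thesis by (simp add: algebra_simps)
    qed
    hence "t * (exp t - 1) \<le> t * (t * exp t)" using True by (intro mult_left_mono) auto
    thus ?thesis using True by (simp add: power2_eq_square)
  next
    case False
    have "1 - exp t \<le> -t" using a(1) by linarith
    hence "(-t) * (1 - exp t) \<le> (-t) * (-t)" using False by (intro mult_left_mono) auto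
    moreover have "(-t)*(-t) \<le> t^2 * exp \<bar>t\<bar>"
      using mult_left_mono[of 1 "exp \<bar>t\<bar>" "t^2"] by (simp add: power2_eq_square)
    ultimately show ?thesis by (simp add: algebra_simps)
  qed
  show ?thesis using nn up up2 by simp
qed

lemma D_bound:
  fixes u h y a :: real
  assumes u: "u > 0" and h: "h \<noteq> 0" "\<bar>h\<bar> < 1"
  shows "\<bar>(u powr a * exp ((y+h)*u - u^2/2) - u powr a * exp (y*u - u^2/2)) / h
            - u powr (a+1) * exp (y*u - u^2/2)\<bar>
         \<le> \<bar>h\<bar> * (u powr (a+2) * exp ((y+1)*u - u^2/2))"
proof -
  define E where "E = exp (y*u - u^2/2)"
  define t where "t = h*u"
  have E0: "E > 0" by (simp add: E_def)
  have e1: "exp ((y+h)*u - u^2/2) = E * exp t" by (simp add: E_def t_def exp_add[symmetric] algebra_simps)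
  have e2: "exp ((y+1)*u - u^2/2) = E * exp u" by (simp add: E_def exp_add[symmetric] algebra_simps)
  have p1: "u powr (a+1) = u powr a * u" using u by (simp add: powr_add)
  have p2: "u powr (a+2) = u powr a * u^2" using u by (simp add: powr_add power2_eq_square)
  have eq: "(u powr a * exp ((y+h)*u - u^2/2) - u powr a * exp (y*u - u^2/2)) / h
            - u powr (a+1) * exp (y*u - u^2/2) = u powr a * E * (exp t - 1 - t) / h"
    unfolding e1 p1 E_def[symmetric] using h(1) by (simp add: t_def field_simps)
  have "\<bar>u powr a * E * (exp t - 1 - t) / h\<bar> = u powr a * E * \<bar>exp t - 1 - t\<bar> / \<bar>h\<bar>"
    using E0 u by (simp add: abs_mult)
  also have "\<dots> \<le> u powr a * E * (t^2 * exp \<bar>t\<bar>) / \<bar>h\<bar>"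
    using E0 u h by (intro divide_right_mono mult_left_mono exp_taylor2_bound) auto
  also have "\<dots> = \<bar>h\<bar> * (u powr a * u^2 * E * exp \<bar>t\<bar>)"
    using h by (simp add: t_def power2_eq_square field_simps abs_mult)
  also have "\<dots> \<le> \<bar>h\<bar> * (u powr a * u^2 * E * exp u)"
  proof -
    have "\<bar>t\<bar> \<le> u" using u h by (simp add: t_def abs_mult mult_left_le_one_le)
    thus ?thesis using E0 u by (intro mult_left_mono) auto
  qed
  also have "\<dots> = \<bar>h\<bar> * (u powr (a+2) * exp ((y+1)*u - u^2/2))"
    unfolding p2 e2 by (simp add: mult_ac)
  finally show ?thesis using eq by simp
qed

lemma gI_deriv:
  assumes a: "a > -1"
  shows "(gI a has_real_derivative gI (a+1) y) (at y)"
proof -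
  let ?P = "\<lambda>a y u::real. u powr a * exp (y*u - u^2/2)"
  have ev: "\<forall>\<^sub>F h in at 0. norm ((gI a (y + h) - gI a y) / h - gI (a+1) y) \<le> \<bar>h\<bar> * gI (a+2) (y+1)"
    unfolding eventually_at
  proof (intro exI[of _ 1] conjI ballI impI)
    fix h :: real assume "h \<in> UNIV" and hh: "h \<noteq> 0 \<and> dist h 0 < 1"
    hence h: "h \<noteq> 0" "\<bar>h\<bar> < 1" by auto
    define D where "D = (\<lambda>u. (?P a (y+h) u - ?P a y u) / h - ?P (a+1) y u)"
    have i0: "set_integrable lborel {0<..} (?P a y)" using gI_integrable[OF a] .
    have i1: "set_integrable lborel {0<..} (?P a (y+h))" using gI_integrable[OF a] .
    have i2: "set_integrable lborel {0<..} (?P (a+1) y)" using gI_integrable a by simp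
    have i3: "set_integrable lborel {0<..} (?P (a+2) (y+1))" using gI_integrable a by simp
    have iD: "set_integrable lborel {0<..} D" unfolding D_def
      by (intro set_integral_diff(1) set_integrable_divide i0 i1 i2)
    have "(LBINT u:{0<..}. D u) = (LBINT u:{0<..}. (?P a (y+h) u - ?P a y u) / h) - gI (a+1) y"
      unfolding D_def gI_def
      by (rule set_integral_diff(2), intro set_integrable_divide set_integral_diff(1) i0 i1 i2, rule i2)
    also have "(LBINT u:{0<..}. (?P a (y+h) u - ?P a y u) / h) = (LBINT u:{0<..}. (?P a (y+h) u - ?P a y u)) / h"
      by simp
    also have "(LBINT u:{0<..}. (?P a (y+h) u - ?P a y u)) = gI a (y+h) - gI a y"
      unfolding gI_def by (rule set_integral_diff(2)[OF i1 i0])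
    finally have "(gI a (y + h) - gI a y) / h - gI (a+1) y = (LBINT u:{0<..}. D u)" by simp
    also have "norm \<dots> \<le> (LBINT u:{0<..}. norm (D u))" by (rule set_integral_norm_bound[OF iD])
    also have "\<dots> \<le> (LBINT u:{0<..}. \<bar>h\<bar> * ?P (a+2) (y+1) u)"
      by (rule set_integral_mono[OF set_integrable_norm[OF iD] set_integrable_mult_right[OF i3]])
         (auto simp: D_def intro!: D_bound h)
    also have "\<dots> = \<bar>h\<bar> * gI (a+2) (y+1)" by (simp add: gI_def)
    finally show "norm ((gI a (y + h) - gI a y) / h - gI (a+1) y) \<le> \<bar>h\<bar> * gI (a+2) (y+1)" .
  qed simp
  have "((\<lambda>h. (gI a (y + h) - gI a y) / h - gI (a+1) y) \<longlongrightarrow> 0) (at 0)"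
    by (rule Lim_null_comparison[OF ev]) (auto intro!: tendsto_eq_intros)
  thus ?thesis unfolding DERIV_def by (simp add: LIM_zero_iff)
qed

lemma lim_top: "((\<lambda>u::real. u powr b * exp (y*u - u^2/2)) \<longlongrightarrow> 0) at_top"
  by real_asymp

lemma lim_zero: assumes "b > 0" shows "((\<lambda>u::real. u powr b * exp (y*u - u^2/2)) \<longlongrightarrow> 0) (at_right 0)"
proof -
  have "((\<lambda>u::real. u powr b * exp (y*u - u^2/2)) \<longlongrightarrow> 0 * exp (y*0 - 0^2/2)) (at_right 0)"
    by (intro tendsto_mult tendsto_zero_powrI assms tendsto_intros)
       (auto simp: eventually_at_right_less eventually_at_filter assms)
  thus ?thesis by simp
qed

lemma gI_ode:
  assumes a: "a > -1"
  shows "gI (a+2) y = y * gI (a+1) y + (a+1) * gI a y"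
proof -
  let ?P = "\<lambda>a y u::real. u powr a * exp (y*u - u^2/2)"
  define f where "f = (\<lambda>u. (a+1) * ?P a y u + y * ?P (a+1) y u - ?P (a+2) y u)"
  define F where "F = (\<lambda>u. ?P (a+1) y u)"
  have i0: "set_integrable lborel {0<..} (?P a y)" using gI_integrable[OF a] .
  have i1: "set_integrable lborel {0<..} (?P (a+1) y)" using gI_integrable a by simp
  have i2: "set_integrable lborel {0<..} (?P (a+2) y)" using gI_integrable a by simp
  have fi: "set_integrable lborel (einterval 0 \<infinity>) f"
    unfolding f_def zero_ereal_def einterval_eq
    by (intro set_integral_diff(1) set_integral_add(1) set_integrable_mult_right i0 i1 i2)
  have "(LBINT u=0..\<infinity>. f u) = 0 - 0"
  proof (rule interval_integral_FTC_integrable[OF _ _ _ fi])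
    fix x :: real assume "0 < ereal x" "ereal x < \<infinity>"
    hence x: "x > 0" by simp
    have "(F has_real_derivative
            (a+1) * x powr (a+1-1) * exp (y*x - x^2/2) + x powr (a+1) * (exp (y*x - x^2/2) * (y - 2*x/2))) (at x)"
      unfolding F_def using x
      by (auto intro!: derivative_eq_intros simp: power2_eq_square)
    moreover have "(a+1) * x powr (a+1-1) * exp (y*x - x^2/2) + x powr (a+1) * (exp (y*x - x^2/2) * (y - 2*x/2)) = f x"
    proof -
      have "x powr (a+2) = x powr (a+1) * x" using x powr_add[of x "a+1" 1] by (simp add: add.assoc)
      thus ?thesis unfolding f_def by (simp add: algebra_simps)
    qed
    ultimately show "(F has_vector_derivative f x) (at x)"
      by (simp add: has_real_derivative_iff_has_vector_derivative)
    show "isCont f x" unfolding f_def using x by (auto intro!: continuous_intros)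
  next
    show "((F \<circ> real_of_ereal) \<longlongrightarrow> 0) (at_right 0)"
      unfolding zero_ereal_def ereal_tendsto_simps F_def using a by (intro lim_zero) simp
    show "((F \<circ> real_of_ereal) \<longlongrightarrow> 0) (at_left \<infinity>)"
      unfolding ereal_tendsto_simps F_def by (rule lim_top)
  qed simp
  hence "(LBINT u:{0<..}. f u) = 0" by (simp add: interval_lebesgue_integral_0_infty)
  moreover have "(LBINT u:{0<..}. f u) = (a+1) * gI a y + y * gI (a+1) y - gI (a+2) y"
    unfolding f_def gI_def
    by (subst set_integral_diff(2), intro set_integral_add(1) set_integrable_mult_right i0 i1, rule i2,
        subst set_integral_add(2), auto intro!: i0 i1)
  ultimately show ?thesis by simp
qed

lemma gI_lower_gen:
  assumes a: "a > -1" and s: "s > 0"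
    and m: "\<And>u. u \<in> {s..s+1} \<Longrightarrow> m \<le> u powr a * exp (y*u - u^2/2)"
  shows "m \<le> gI a y"
proof -
  let ?P = "\<lambda>u::real. u powr a * exp (y*u - u^2/2)"
  have i: "set_integrable lborel {0<..} ?P" using gI_integrable[OF a] .
  have i1: "set_integrable lborel {s..s+1} ?P" by (rule set_integrable_subset[OF i]) (use s in auto)
  have i2: "set_integrable lborel ({0<..} - {s..s+1}) ?P" by (rule set_integrable_subset[OF i]) auto
  have "{0<..} = {s..s+1} \<union> ({0<..} - {s..s+1})" using s by auto
  hence "gI a y = (LBINT u:{s..s+1}. ?P u) + (LBINT u:({0<..} - {s..s+1}). ?P u)"
    unfolding gI_def by (metis (no_types, lifting) Diff_disjoint i1 i2 set_integral_Un)
  moreover have "0 \<le> (LBINT u:({0<..} - {s..s+1}). ?P u)"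
    using set_integral_mono[OF _ i2, of "\<lambda>_. 0"] by (simp add: set_integrable_def)
  moreover have "m \<le> (LBINT u:{s..s+1}. ?P u)"
  proof -
    have "(LBINT u:{s..s+1}. m) \<le> (LBINT u:{s..s+1}. ?P u)"
      by (rule set_integral_mono[OF _ i1]) (auto intro: m simp: set_integrable_def)
    moreover have "(LBINT u:{s..s+1}. m) = m" by (subst set_integral_const) auto
    ultimately show ?thesis by simp
  qed
  ultimately show ?thesis by linarith
qed

lemma powr_ge_inv:
  assumes "a > -1" "u \<ge> (1::real)"
  shows "u powr a \<ge> 1 / u"
proof -
  have "u powr (-1) \<le> u powr a" using assms by (intro powr_mono) auto
  thus ?thesis using assms by (simp add: powr_minus divide_inverse)
qed

lemma gI_pos:
  assumes a: "a > -1"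
  shows "gI a y > 0"
proof -
  define m where "m = exp (-2*\<bar>y\<bar> - 2) / 2"
  have "m \<le> gI a y"
  proof (rule gI_lower_gen[OF a, of 1])
    fix u :: real assume u: "u \<in> {1..1+1}"
    have "1/2 \<le> u powr a"
    proof -
      have "1/2 \<le> 1/u" using u by (auto simp: field_simps)
      moreover have "1/u \<le> u powr a" using powr_ge_inv[OF a, of u] u by simp
      ultimately show ?thesis by linarith
    qed
    moreover have "exp (-2*\<bar>y\<bar> - 2) \<le> exp (y*u - u^2/2)"
    proof -
      have "\<bar>y*u\<bar> \<le> \<bar>y\<bar> * 2" using u by (auto simp: abs_mult intro!: mult_left_mono)
      moreover have "u^2 \<le> 4" using u by (auto simp: power2_eq_square intro: mult_mono[of u 2 u 2, simplified])
      ultimately show ?thesis by (auto simp: abs_le_iff)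
    qed
    ultimately have "1/2 * exp (-2*\<bar>y\<bar> - 2) \<le> u powr a * exp (y*u - u^2/2)"
      by (intro mult_mono) auto
    thus "m \<le> u powr a * exp (y*u - u^2/2)" by (simp add: m_def)
  qed simp
  moreover have "m > 0" by (simp add: m_def)
  ultimately show ?thesis by linarith
qed

lemma gI_lower:
  assumes a: "a > -1" and y: "y \<ge> 1"
  shows "exp ((y^2 - 1)/2) / (y + 1) \<le> gI a y"
proof (rule gI_lower_gen[OF a, of y])
  fix u :: real assume u: "u \<in> {y..y+1}"
  have "1/(y+1) \<le> u powr a"
  proof -
    have "1/(y+1) \<le> 1/u" using u y by (auto simp: field_simps)
    moreover have "1/u \<le> u powr a" using powr_ge_inv[OF a, of u] u y by simp
    ultimately show ?thesis by linarith
  qed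
  moreover have "exp ((y^2 - 1)/2) \<le> exp (y*u - u^2/2)"
  proof -
    have "(u - y)^2 \<le> 1" using u by (auto simp: power2_eq_square intro: mult_le_one)
    hence "(y^2 - 1)/2 \<le> (y^2 - (u-y)^2)/2" by (intro divide_right_mono) auto
    moreover have e: "y*u - u^2/2 = (y^2 - (u-y)^2)/2" by (simp add: power2_eq_square field_simps)
    ultimately show ?thesis by (simp only: e exp_le_cancel_iff)
  qed
  ultimately have "1/(y+1) * exp ((y^2 - 1)/2) \<le> u powr a * exp (y*u - u^2/2)"
    by (intro mult_mono) (use y in auto)
  thus "exp ((y^2 - 1)/2) / (y + 1) \<le> u powr a * exp (y*u - u^2/2)" by simp
qed (use y in simp)

locale ouabs =
  fixes F G F1 G1 F2 G2 :: "real \<Rightarrow> real" and \<beta> \<theta> c cs :: real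
  assumes dF: "\<And>x. (F has_real_derivative F1 x) (at x)"
    and dF1: "\<And>x. (F1 has_real_derivative F2 x) (at x)"
    and dG: "\<And>x. (G has_real_derivative G1 x) (at x)"
    and dG1: "\<And>x. (G1 has_real_derivative G2 x) (at x)"
    and Fpos: "\<And>x. F x > 0" and Gpos: "\<And>x. G x > 0"
    and F1pos: "\<And>x. F1 x > 0" and G1neg: "\<And>x. G1 x < 0"
    and odeF: "\<And>x. F2 x = \<beta> * (x - \<theta>) * F1 x + c * F x"
    and odeG: "\<And>x. G2 x = \<beta> * (x - \<theta>) * G1 x + c * G x"
    and cs: "cs > 0"
    and gF: "((\<lambda>x. exp x / F x) \<longlongrightarrow> 0) at_top"
    and gF1: "((\<lambda>x. exp x / F1 x) \<longlongrightarrow> 0) at_top"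
    and Gbot: "filterlim G at_top at_bot"
begin

definition "psi x = F x / G x"
definition "W x = F1 x * G x - F x * G1 x"
definition "phi = inv psi"
definition "hh x = exp x - cs"
definition "HH z = (if z > 0 then (let x = phi z in hh x / G x) else Lim at_bot (\<lambda>x. max 0 (hh x) / G x))"
definition "D1 x = (exp x * G x - hh x * G1 x) / W x"
definition "Lx x = exp x - \<beta> * (x - \<theta>) * exp x - c * hh x"

lemma Wpos: "W x > 0"
proof -
  have "F1 x * G x > 0" using F1pos Gpos by simp
  moreover have "F x * G1 x < 0" using Fpos G1neg mult_pos_neg by blast
  ultimately show ?thesis unfolding W_def by linarith
qed

lemma psi_deriv: "(psi has_real_derivative W x / (G x)^2) (at x)"
  unfolding psi_def W_def using Gpos[of x]
  by (auto intro!: derivative_eq_intros dF dG simp: power2_eq_square field_simps)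

lemma psi_pos: "psi x > 0" using Fpos Gpos by (simp add: psi_def)

lemma psi_less: assumes "x < y" shows "psi x < psi y"
proof (rule DERIV_pos_imp_increasing[OF assms])
  fix t show "\<exists>y. DERIV psi t :> y \<and> y > 0"
    using psi_deriv[of t] Wpos[of t] Gpos[of t] by (intro exI[of _ "W t / (G t)^2"]) auto
qed

lemma psi_strict: "strict_mono psi" using psi_less by (simp add: strict_mono_def)
lemma psi_less_iff: "psi x < psi y \<longleftrightarrow> x < y" using psi_strict by (simp add: strict_mono_less)
lemma psi_le_iff: "psi x \<le> psi y \<longleftrightarrow> x \<le> y" using psi_strict by (simp add: strict_mono_less_eq)
lemma psi_inj: "inj psi" using psi_strict strict_mono_imp_inj_on by blast
lemma psi_cont: "isCont psi x" using psi_deriv DERIV_isCont by blast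

lemma G_mono: "x \<le> y \<Longrightarrow> G y \<le> G x"
  by (rule DERIV_nonpos_imp_nonincreasing[of x y G]) (use dG G1neg in \<open>auto intro: less_imp_le\<close>)
lemma F_mono: "x \<le> y \<Longrightarrow> F x \<le> F y"
  by (rule DERIV_nonneg_imp_nondecreasing[of x y F]) (use dF F1pos in \<open>auto intro: less_imp_le\<close>)

lemma F_top: "filterlim F at_top at_top"
proof -
  have "eventually (\<lambda>x. exp x / F x < 1) at_top" using gF by (rule order_tendstoD) simp
  hence "eventually (\<lambda>x. exp x \<le> F x) at_top"
    by eventually_elim (use Fpos in \<open>auto simp: field_simps\<close>)
  thus ?thesis by (rule filterlim_at_top_mono[OF exp_at_top])
qed

lemma psi_top: "filterlim psi at_top at_top"
proof -
  have "filterlim (\<lambda>x. inverse (G 0) * F x) at_top at_top"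
    using Gpos[of 0] by (intro filterlim_tendsto_pos_mult_at_top[OF tendsto_const _ F_top]) auto
  moreover have "eventually (\<lambda>x. inverse (G 0) * F x \<le> psi x) at_top"
    using eventually_ge_at_top[of 0]
  proof eventually_elim
    case (elim x)
    have "F x / G 0 \<le> F x / G x"
      using G_mono[OF elim] Fpos[of x] Gpos[of x] by (intro divide_left_mono) auto
    thus ?case by (simp add: psi_def divide_inverse mult.commute)
  qed
  ultimately show ?thesis by (rule filterlim_at_top_mono)
qed

lemma psi_bot: "(psi \<longlongrightarrow> 0) at_bot"
proof (rule tendsto_sandwich[of "\<lambda>_. 0" _ _ "\<lambda>x. F 0 * inverse (G x)"])
  show "eventually (\<lambda>x. 0 \<le> psi x) at_bot" using psi_pos by (simp add: less_imp_le)
  show "eventually (\<lambda>x. psi x \<le> F 0 * inverse (G x)) at_bot"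
    using eventually_le_at_bot[of 0]
  proof eventually_elim
    case (elim x)
    thus ?case using F_mono[OF elim] Gpos[of x] by (simp add: psi_def divide_inverse divide_right_mono)
  qed
  show "((\<lambda>x. F 0 * inverse (G x)) \<longlongrightarrow> 0) at_bot"
    using tendsto_mult_right_zero[OF tendsto_inverse_0_at_top[OF Gbot]] by simp
qed simp

lemma psi_surj: assumes "z > 0" shows "\<exists>x. psi x = z"
proof -
  obtain x1 where x1: "psi x1 < z"
    using order_tendstoD(2)[OF psi_bot assms] by (auto simp: eventually_at_bot_linorder)
  obtain x2 where x2: "psi x2 > z"
    using psi_top unfolding filterlim_at_top_dense by (auto simp: eventually_at_top_linorder)
  have "psi x1 < psi x2" using x1 x2 by simp
  hence "x1 < x2" by (simp add: psi_less_iff)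
  thus ?thesis using IVT[of psi x1 z x2] x1 x2 psi_cont by auto
qed

lemma psi_phi: "z > 0 \<Longrightarrow> psi (phi z) = z"
  unfolding phi_def using psi_surj by (metis f_inv_into_f rangeI)
lemma phi_psi: "phi (psi x) = x"
  unfolding phi_def using psi_inj by simp
lemma phi_less_iff: "z > 0 \<Longrightarrow> phi z < x \<longleftrightarrow> z < psi x"
  by (metis psi_less_iff psi_phi)
lemma less_phi_iff: "z > 0 \<Longrightarrow> x < phi z \<longleftrightarrow> psi x < z"
  by (metis psi_less_iff psi_phi)

lemma phi_cont: "z > 0 \<Longrightarrow> isCont phi z"
proof -
  assume z: "z > 0"
  have "isCont phi (psi (phi z))" by (rule isCont_inverse_function[where d=1]) (auto simp: phi_psi psi_cont)
  thus ?thesis using z by (simp add: psi_phi)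
qed

lemma phi_deriv: assumes z: "z > 0" shows "(phi has_real_derivative (G (phi z))^2 / W (phi z)) (at z)"
proof -
  have "(phi has_real_derivative inverse (W (phi z) / (G (phi z))^2)) (at z)"
    by (rule DERIV_inverse_function[where f=psi and g=phi and a=0 and b="z+1"])
       (use psi_deriv Wpos[of "phi z"] Gpos[of "phi z"] z psi_phi phi_cont in auto)
  thus ?thesis by simp
qed

lemma HH_pos: "z > 0 \<Longrightarrow> HH z = hh (phi z) / G (phi z)"
  by (simp add: HH_def Let_def)

lemma q_deriv: "((\<lambda>x. hh x / G x) has_real_derivative (exp x * G x - hh x * G1 x) / (G x)^2) (at x)"
  unfolding hh_def using Gpos[of x]
  by (auto intro!: derivative_eq_intros dG simp: power2_eq_square field_simps)

lemma HH_deriv: assumes z: "z > 0" shows "(HH has_real_derivative D1 (phi z)) (at z)"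
proof -
  have "((\<lambda>z. hh (phi z) / G (phi z)) has_real_derivative
      (exp (phi z) * G (phi z) - hh (phi z) * G1 (phi z)) / (G (phi z))^2 * ((G (phi z))^2 / W (phi z))) (at z)"
    by (rule DERIV_chain2[OF q_deriv phi_deriv[OF z]])
  moreover have "(exp (phi z) * G (phi z) - hh (phi z) * G1 (phi z)) / (G (phi z))^2 * ((G (phi z))^2 / W (phi z))
      = D1 (phi z)" using Gpos[of "phi z"] by (simp add: D1_def)
  ultimately have "((\<lambda>z. hh (phi z) / G (phi z)) has_real_derivative D1 (phi z)) (at z)" by simp
  thus ?thesis
    by (rule has_field_derivative_transform_within_open[where S="{0<..}"]) (use z in \<open>auto simp: HH_pos\<close>)
qed

lemma deriv_HH: "z > 0 \<Longrightarrow> deriv HH z = D1 (phi z)"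
  using HH_deriv DERIV_imp_deriv by blast

lemma D1_deriv_raw: "(D1 has_real_derivative
   ((exp x * G x - hh x * G2 x) * W x - (exp x*G x - hh x*G1 x) * (F2 x * G x - F x * G2 x)) / (W x)^2) (at x)"
proof -
  have W: "(W has_real_derivative F2 x * G x - F x * G2 x) (at x)"
    unfolding W_def by (auto intro!: derivative_eq_intros dF dG dF1 dG1 simp: algebra_simps)
  have N: "((\<lambda>x. exp x * G x - hh x * G1 x) has_real_derivative exp x * G x - hh x * G2 x) (at x)"
    unfolding hh_def by (auto intro!: derivative_eq_intros dF dG dF1 dG1 simp: algebra_simps)
  show ?thesis unfolding D1_def
    using DERIV_divide[OF N W] Wpos[of x] by (simp add: power2_eq_square)
qed

lemma D1_deriv: "(D1 has_real_derivative G x * Lx x / W x) (at x)"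
proof -
  have "((exp x * G x - hh x * G2 x) * W x - (exp x*G x - hh x*G1 x) * (F2 x * G x - F x * G2 x))
        = G x * Lx x * W x"
    unfolding odeF odeG Lx_def W_def by (simp add: algebra_simps)
  thus ?thesis using D1_deriv_raw[of x] Wpos[of x] by (simp add: power2_eq_square)
qed

lemma HH2_deriv: assumes z: "z > 0"
  shows "((\<lambda>z. D1 (phi z)) has_real_derivative G (phi z) * Lx (phi z) / W (phi z) * ((G (phi z))^2 / W (phi z))) (at z)"
  by (rule DERIV_chain2[OF D1_deriv phi_deriv[OF z]])

lemma derivHH_deriv: assumes z: "z > 0"
  shows "(deriv HH has_real_derivative G (phi z) * Lx (phi z) / W (phi z) * ((G (phi z))^2 / W (phi z))) (at z)"
  by (rule has_field_derivative_transform_within_open[OF HH2_deriv[OF z], where S="{0<..}"]) (use z deriv_HH in auto)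

lemma HH0: "HH 0 = 0"
proof -
  have "eventually (\<lambda>x. max 0 (hh x) / G x = 0) at_bot"
    using eventually_le_at_bot[of "ln cs - 1"]
  proof eventually_elim
    case (elim x)
    hence "exp x < exp (ln cs)" by simp
    hence "exp x < cs" using cs by simp
    thus ?case by (simp add: hh_def)
  qed
  hence "((\<lambda>x. max 0 (hh x) / G x) \<longlongrightarrow> 0) at_bot" by (rule tendsto_eventually)
  hence "Lim at_bot (\<lambda>x. max 0 (hh x) / G x) = 0" by (intro tendsto_Lim) auto
  thus ?thesis by (simp add: HH_def)
qed

lemma q_bot: "((\<lambda>x. hh x / G x) \<longlongrightarrow> 0) at_bot"
proof -
  have "((\<lambda>x. (exp x - cs) * inverse (G x)) \<longlongrightarrow> (0 - cs) * 0) at_bot"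
    by (intro tendsto_mult tendsto_diff exp_at_bot tendsto_const tendsto_inverse_0_at_top Gbot)
  thus ?thesis by (simp add: hh_def divide_inverse)
qed

lemma HH_cont: "continuous_on {0..} HH"
proof (clarsimp simp: continuous_on_eq_continuous_within)
  fix z :: real assume z: "0 \<le> z"
  show "continuous (at z within {0..}) HH"
  proof (cases "z = 0")
    case False
    hence "isCont HH z" using z HH_deriv[of z] DERIV_isCont by auto
    thus ?thesis by (rule continuous_at_imp_continuous_within)
  next
    case True
    let ?F = "at (0::real) within {0..}"
    have ev: "eventually (\<lambda>z. z > 0) ?F" by (auto simp: eventually_at_filter)
    have "filterlim phi at_bot ?F"
      unfolding filterlim_at_bot
    proof
      fix Z :: real
      have "eventually (\<lambda>z. z \<in> {..<psi Z}) (nhds (0::real))" by (rule eventually_nhds_in_open) (use psi_pos[of Z] in auto)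
      hence "eventually (\<lambda>z. z < psi Z) (nhds (0::real))" by simp
      hence "eventually (\<lambda>z. z < psi Z) ?F" by (auto simp: eventually_at_filter elim: eventually_mono)
      thus "eventually (\<lambda>z. phi z \<le> Z) ?F"
        using ev by eventually_elim (auto simp: phi_less_iff less_imp_le)
    qed
    hence "((\<lambda>z. hh (phi z) / G (phi z)) \<longlongrightarrow> 0) ?F" by (rule filterlim_compose[OF q_bot])
    hence "(HH \<longlongrightarrow> 0) ?F"
      by (rule tendsto_cong[THEN iffD1, rotated]) (use ev in \<open>eventually_elim, simp add: HH_pos\<close>)
    thus ?thesis using True by (simp add: continuous_within HH0)
  qed
qed

lemma HH_neg: "0 < z \<Longrightarrow> z < psi (ln cs) \<Longrightarrow> HH z < 0"
proof -
  assume z: "0 < z" "z < psi (ln cs)"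
  hence "phi z < ln cs" by (simp add: phi_less_iff)
  hence "exp (phi z) < exp (ln cs)" by simp
  hence "exp (phi z) < cs" using cs by simp
  thus ?thesis using z Gpos[of "phi z"] by (simp add: HH_pos hh_def divide_neg_pos)
qed

lemma HH_posv: "psi (ln cs) < z \<Longrightarrow> HH z > 0"
proof -
  assume z: "psi (ln cs) < z"
  hence z0: "z > 0" using psi_pos[of "ln cs"] by linarith
  hence "ln cs < phi z" using z by (simp add: less_phi_iff)
  hence "exp (ln cs) < exp (phi z)" by simp
  hence "cs < exp (phi z)" using cs by simp
  thus ?thesis using z0 Gpos[of "phi z"] by (simp add: HH_pos hh_def)
qed

lemma D1_pos: "hh x \<ge> 0 \<Longrightarrow> D1 x > 0"
proof -
  assume h: "hh x \<ge> 0"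
  have "exp x * G x > 0" using Gpos by simp
  moreover have "hh x * G1 x \<le> 0" using h G1neg[of x] by (simp add: mult_nonneg_nonpos less_imp_le)
  ultimately show ?thesis using Wpos[of x] unfolding D1_def by (intro divide_pos_pos) auto
qed

lemma HH_mono: "strict_mono_on {psi (ln cs)<..} HH"
proof (rule strict_mono_onI)
  fix r s assume rs: "r \<in> {psi (ln cs)<..}" "s \<in> {psi (ln cs)<..}" "r < s"
  show "HH r < HH s"
  proof (rule DERIV_pos_imp_increasing[OF rs(3)])
    fix t assume t: "r \<le> t" "t \<le> s"
    hence tz: "psi (ln cs) < t" using rs by auto
    hence t0: "t > 0" using psi_pos[of "ln cs"] by linarith
    hence "ln cs < phi t" using tz by (simp add: less_phi_iff)
    hence "exp (ln cs) < exp (phi t)" by simp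
    hence "hh (phi t) \<ge> 0" using cs unfolding hh_def by simp
    thus "\<exists>y. DERIV HH t :> y \<and> y > 0" using HH_deriv[OF t0] D1_pos by blast
  qed
qed

lemma phi_top: "filterlim phi at_top at_top"
  unfolding filterlim_at_top
proof
  fix Z :: real
  show "eventually (\<lambda>z. Z \<le> phi z) at_top"
    using eventually_gt_at_top[of "psi Z"]
  proof eventually_elim
    case (elim z)
    hence "z > 0" using psi_pos[of Z] by linarith
    thus ?case using elim less_phi_iff[of z Z] by simp
  qed
qed

lemma D1_top: "(D1 \<longlongrightarrow> 0) at_top"
proof (rule tendsto_sandwich[of "\<lambda>_. 0" _ _ "\<lambda>x. exp x / F1 x + exp x / F x"])
  have ev: "eventually (\<lambda>x. hh x \<ge> 0) at_top"
    using eventually_ge_at_top[of "ln cs"]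
  proof eventually_elim
    case (elim x)
    hence "exp (ln cs) \<le> exp x" by simp
    thus ?case using cs by (simp add: hh_def)
  qed
  show "eventually (\<lambda>x. 0 \<le> D1 x) at_top" using ev by eventually_elim (use D1_pos less_imp_le in blast)
  show "eventually (\<lambda>x. D1 x \<le> exp x / F1 x + exp x / F x) at_top"
    using ev
  proof eventually_elim
    case (elim x)
    have Wx: "W x > 0" by (rule Wpos)
    have w1: "F1 x * G x \<le> W x" using Fpos[of x] G1neg[of x] unfolding W_def
      by (simp add: mult_pos_neg less_imp_le)
    have w2: "F x * (- G1 x) \<le> W x" using F1pos[of x] Gpos[of x] unfolding W_def
      by (simp add: less_imp_le)
    have "D1 x = exp x * G x / W x + hh x * (- G1 x) / W x" by (simp add: D1_def diff_divide_distrib)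
    also have "exp x * G x / W x \<le> exp x * G x / (F1 x * G x)"
      using w1 F1pos[of x] Gpos[of x] Wx by (intro divide_left_mono) auto
    also have "\<dots> = exp x / F1 x" using Gpos[of x] by simp
    also have "hh x * (- G1 x) / W x \<le> exp x * (- G1 x) / (F x * (- G1 x))"
    proof -
      have "hh x * (- G1 x) \<le> exp x * (- G1 x)" using G1neg[of x] cs by (intro mult_right_mono) (auto simp: hh_def)
      hence "hh x * (- G1 x) / W x \<le> exp x * (- G1 x) / W x" using Wx by (intro divide_right_mono) auto
      also have "\<dots> \<le> exp x * (- G1 x) / (F x * (- G1 x))"
        using w2 Fpos[of x] G1neg[of x] by (intro divide_left_mono mult_pos_pos) (auto simp: Wx mult_pos_neg less_imp_le)
      finally show ?thesis .
    qed
    also have "exp x * (- G1 x) / (F x * (- G1 x)) = exp x / F x" using G1neg[of x] by simp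
    finally show ?case by simp
  qed
  show "((\<lambda>x. exp x / F1 x + exp x / F x) \<longlongrightarrow> 0) at_top"
    using tendsto_add[OF gF1 gF] by simp
qed simp

lemma derivHH_top: "(deriv HH \<longlongrightarrow> 0) at_top"
proof -
  have "((\<lambda>z. D1 (phi z)) \<longlongrightarrow> 0) at_top" by (rule filterlim_compose[OF D1_top phi_top])
  thus ?thesis
    by (rule tendsto_cong[THEN iffD1, rotated]) (use eventually_gt_at_top[of 0] in \<open>eventually_elim, simp add: deriv_HH\<close>)
qed

lemma HH_convex:
  assumes L: "\<And>x. x \<le> xs \<Longrightarrow> Lx x \<ge> 0"
  shows "convex_on {0<..psi xs} HH"
proof (rule f''_ge0_imp_convex[where f'="\<lambda>z. D1 (phi z)"
      and f''="\<lambda>z. G (phi z) * Lx (phi z) / W (phi z) * ((G (phi z))^2 / W (phi z))"])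
  fix z assume z: "z \<in> {0<..psi xs}"
  show "DERIV HH z :> D1 (phi z)" using z HH_deriv by auto
  show "DERIV (\<lambda>z. D1 (phi z)) z :> G (phi z) * Lx (phi z) / W (phi z) * ((G (phi z))^2 / W (phi z))"
    using z HH2_deriv by auto
  have "phi z \<le> xs" using z psi_phi[of z] psi_le_iff[of "phi z" xs] by auto
  hence "Lx (phi z) \<ge> 0" by (rule L)
  thus "0 \<le> G (phi z) * Lx (phi z) / W (phi z) * ((G (phi z))^2 / W (phi z))"
    using Gpos[of "phi z"] Wpos[of "phi z"] by simp
qed simp

lemma HH_concave:
  assumes L: "\<And>x. x \<ge> xs \<Longrightarrow> Lx x \<le> 0"
  shows "concave_on {psi xs..} HH"
proof (rule f''_le0_imp_concave[where f'="\<lambda>z. D1 (phi z)"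
      and f''="\<lambda>z. G (phi z) * Lx (phi z) / W (phi z) * ((G (phi z))^2 / W (phi z))"])
  fix z assume z: "z \<in> {psi xs..}"
  hence z0: "z > 0" using psi_pos[of xs] by auto
  show "DERIV HH z :> D1 (phi z)" using z0 HH_deriv by auto
  show "DERIV (\<lambda>z. D1 (phi z)) z :> G (phi z) * Lx (phi z) / W (phi z) * ((G (phi z))^2 / W (phi z))"
    using z0 HH2_deriv by auto
  have "xs \<le> phi z" using z z0 psi_phi[of z] psi_le_iff[of xs "phi z"] by auto
  hence "Lx (phi z) \<le> 0" by (rule L)
  thus "G (phi z) * Lx (phi z) / W (phi z) * ((G (phi z))^2 / W (phi z)) \<le> 0"
    using Gpos[of "phi z"] Wpos[of "phi z"]
    by (intro mult_nonpos_nonneg divide_nonpos_pos mult_nonneg_nonpos divide_nonneg_pos) auto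
qed simp

end

lemma fs_decr:
  assumes "mu > 0" "r > 0" "c > 0" "x < y"
  shows "f_s mu sig theta r c y < f_s mu sig theta r c x"
proof -
  have "mu * x < mu * y" using assms by simp
  moreover have "r * c * exp (- y) < r * c * exp (- x)" using assms by simp
  ultimately show ?thesis unfolding f_s_def by linarith
qed

lemma fs_root:
  assumes mu: "mu > 0" and r: "r > 0" and c: "c > 0"
  shows "f_s mu sig theta r c (x_s mu sig theta r c) = 0"
proof -
  define A where "A = mu * theta + sig^2/2 - r"
  define x1 where "x1 = min 0 (A/mu - 1)"
  define x2 where "x2 = max 0 ((A + r*c)/mu + 1)"
  have fx1: "f_s mu sig theta r c x1 \<ge> 0"
  proof -
    have "mu * x1 \<le> mu * (A/mu - 1)" using mu by (simp add: x1_def)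
    also have "\<dots> = A - mu" using mu by (simp add: field_simps)
    finally have "mu * x1 \<le> A - mu" .
    moreover have "r * c * exp (- x1) > 0" using r c by simp
    ultimately show ?thesis unfolding f_s_def A_def using mu by linarith
  qed
  have fx2: "f_s mu sig theta r c x2 \<le> 0"
  proof -
    have "mu * ((A + r*c)/mu + 1) \<le> mu * x2" using mu by (simp add: x2_def)
    moreover have "mu * ((A + r*c)/mu + 1) = A + r*c + mu" using mu by (simp add: field_simps)
    moreover have "exp (- x2) \<le> 1" by (simp add: x2_def)
    hence "r * c * exp (- x2) \<le> r * c" using r c by simp
    ultimately show ?thesis unfolding f_s_def A_def using mu by linarith
  qed
  have "x1 \<le> x2" by (simp add: x1_def x2_def)
  moreover have cont: "isCont (\<lambda>x. f_s mu sig theta r c x) x" for x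
    unfolding f_s_def by (intro continuous_intros)
  ultimately obtain x where x: "f_s mu sig theta r c x = 0"
    using IVT2[of "f_s mu sig theta r c" x2 0 x1] fx1 fx2 by auto
  have "(THE x. f_s mu sig theta r c x = 0) = x"
  proof (rule the_equality)
    show "f_s mu sig theta r c x = 0" by (rule x)
  next
    fix y assume y: "f_s mu sig theta r c y = 0"
    show "y = x" using fs_decr[OF mu r c, of x y, where sig=sig and theta=theta] fs_decr[OF mu r c, of y x, where sig=sig and theta=theta] x y by (cases x y rule: linorder_cases) auto
  qed
  thus ?thesis using x by (simp add: x_s_def)
qed

theorem lemma4p2:
  fixes mu sig theta r c :: real
  assumes "mu > 0" "sig > 0" "r > 0" "c > 0"
  defines "H \<equiv> OU_H mu sig theta r c"
      and "z0 \<equiv> OU_psi mu sig theta r (ln c)"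
      and "zs \<equiv> OU_psi mu sig theta r (x_s mu sig theta r c)"
  shows "continuous_on {0..} H
    \<and> (\<forall>z>0. H differentiable (at z) \<and> deriv H differentiable (at z))
    \<and> H 0 = 0
    \<and> (\<forall>z. 0 < z \<and> z < z0 \<longrightarrow> H z < 0)
    \<and> (\<forall>z. z0 < z \<longrightarrow> H z > 0)
    \<and> strict_mono_on {z0<..} H
    \<and> (deriv H \<longlongrightarrow> 0) at_top
    \<and> convex_on {0<..zs} H
    \<and> concave_on {zs..} H"
proof -
  note mu = assms(1) and sig = assms(2) and r = assms(3) and c = assms(4)
  define a where "a = r/mu - 1"
  define k where "k = sqrt (2*mu/sig^2)"
  have a: "a > -1" using mu r by (simp add: a_def)
  have a1: "a + 1 = r / mu" by (simp add: a_def)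
  have k: "k > 0" using mu sig by (simp add: k_def)
  have k2: "k^2 = 2*mu/sig^2" using mu sig by (simp add: k_def)
  define F where "F = (\<lambda>x. gI a (k*(x-theta)))"
  define F1 where "F1 = (\<lambda>x. k * gI (a+1) (k*(x-theta)))"
  define F2 where "F2 = (\<lambda>x. k^2 * gI (a+2) (k*(x-theta)))"
  define G where "G = (\<lambda>x. gI a (k*(theta-x)))"
  define G1 where "G1 = (\<lambda>x. - k * gI (a+1) (k*(theta-x)))"
  define G2 where "G2 = (\<lambda>x. k^2 * gI (a+2) (k*(theta-x)))"
  have d0: "\<And>y. (gI a has_real_derivative gI (a+1) y) (at y)" by (rule gI_deriv[OF a])
  have d1: "\<And>y. (gI (a+1) has_real_derivative gI (a+2) y) (at y)"
    using gI_deriv[of "a+1"] a by (simp add: add.assoc)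
  have iF: "((\<lambda>x. k*(x-theta)) has_real_derivative k) (at x)" for x
    by (auto intro!: derivative_eq_intros)
  have iG: "((\<lambda>x. k*(theta-x)) has_real_derivative -k) (at x)" for x
    by (auto intro!: derivative_eq_intros)
  have lowF: "exp (((k*(x-theta))^2 - 1)/2) / (k*(x-theta) + 1) \<le> F x" if "x \<ge> theta + 1/k" for x
  proof -
    have "k*(x-theta) \<ge> k * (1/k)" using that k by (intro mult_left_mono) auto
    hence "k*(x-theta) \<ge> 1" using k by simp
    thus ?thesis unfolding F_def by (rule gI_lower[OF a])
  qed
  have lowF1: "k * (exp (((k*(x-theta))^2 - 1)/2) / (k*(x-theta) + 1)) \<le> F1 x" if "x \<ge> theta + 1/k" for x
  proof -
    have "k*(x-theta) \<ge> k * (1/k)" using that k by (intro mult_left_mono) auto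
    hence "k*(x-theta) \<ge> 1" using k by simp
    hence "exp (((k*(x-theta))^2 - 1)/2) / (k*(x-theta) + 1) \<le> gI (a+1) (k*(x-theta))"
      by (intro gI_lower) (use a in auto)
    thus ?thesis unfolding F1_def using k by (intro mult_left_mono) auto
  qed
  have lowG: "exp (((k*(theta-x))^2 - 1)/2) / (k*(theta-x) + 1) \<le> G x" if "x \<le> theta - 1/k" for x
  proof -
    have "k*(theta-x) \<ge> k * (1/k)" using that k by (intro mult_left_mono) auto
    hence "k*(theta-x) \<ge> 1" using k by simp
    thus ?thesis unfolding G_def by (rule gI_lower[OF a])
  qed
  have lim1: "((\<lambda>x. exp x * (k*(x-theta)+1) / exp (((k*(x-theta))^2 - 1)/2)) \<longlongrightarrow> 0) at_top"
    using k by real_asymp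
  have lim2: "filterlim (\<lambda>x. exp (((k*(theta-x))^2 - 1)/2) / (k*(theta-x)+1)) at_top at_bot"
    using k by real_asymp
  interpret ou: ouabs F G F1 G1 F2 G2 "k^2" theta "k^2*(a+1)" c
  proof
    fix x :: real
    show "(F has_real_derivative F1 x) (at x)"
      using DERIV_chain2[OF d0 iF[of x]] unfolding F_def F1_def by (simp add: mult.commute)
    show "(F1 has_real_derivative F2 x) (at x)"
      using DERIV_cmult[OF DERIV_chain2[OF d1 iF[of x]], of k] unfolding F1_def F2_def
      by (simp add: power2_eq_square mult_ac)
    show "(G has_real_derivative G1 x) (at x)"
      using DERIV_chain2[OF d0 iG[of x]] unfolding G_def G1_def by (simp add: mult.commute)
    show "(G1 has_real_derivative G2 x) (at x)"
      using DERIV_cmult[OF DERIV_chain2[OF d1 iG[of x]], of "-k"] unfolding G1_def G2_def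
      by (simp add: power2_eq_square mult_ac)
    show "F x > 0" unfolding F_def by (rule gI_pos[OF a])
    show "G x > 0" unfolding G_def by (rule gI_pos[OF a])
    show "F1 x > 0" unfolding F1_def using gI_pos[of "a+1"] a k by simp
    show "G1 x < 0" unfolding G1_def using gI_pos[of "a+1"] a k by simp
    show "F2 x = k^2 * (x - theta) * F1 x + k^2*(a+1) * F x"
      unfolding F2_def F1_def F_def gI_ode[OF a] by (simp add: algebra_simps power2_eq_square)
    show "G2 x = k^2 * (x - theta) * G1 x + k^2*(a+1) * G x"
      unfolding G2_def G1_def G_def gI_ode[OF a] by (simp add: algebra_simps power2_eq_square)
  next
    show "c > 0" by (rule c)
  next
    show "((\<lambda>x. exp x / F x) \<longlongrightarrow> 0) at_top"
    proof (rule tendsto_sandwich[OF _ _ tendsto_const lim1])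
      show "eventually (\<lambda>x. 0 \<le> exp x / F x) at_top"
        using gI_pos[OF a] by (simp add: F_def less_imp_le)
      show "eventually (\<lambda>x. exp x / F x \<le> exp x * (k*(x-theta)+1) / exp (((k*(x-theta))^2 - 1)/2)) at_top"
        using eventually_ge_at_top[of "theta + 1/k"]
      proof eventually_elim
        case (elim x)
        have p: "k*(x-theta) + 1 > 0"
        proof -
          have "k*(x-theta) \<ge> k * (1/k)" using elim k by (intro mult_left_mono) auto
          thus ?thesis using k by simp
        qed
        have "exp x / F x \<le> exp x / (exp (((k*(x-theta))^2 - 1)/2) / (k*(x-theta) + 1))"
          using lowF[OF elim] p gI_pos[OF a, of "k*(x-theta)"] by (intro divide_left_mono) (auto simp: F_def)
        thus ?case by simp
      qed
    qed
  next
    show "((\<lambda>x. exp x / F1 x) \<longlongrightarrow> 0) at_top"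
    proof (rule tendsto_sandwich[OF _ _ tendsto_const tendsto_mult_right_zero[OF lim1, of "1/k"]])
      show "eventually (\<lambda>x. 0 \<le> exp x / F1 x) at_top"
        using gI_pos[of "a+1"] a k by (simp add: F1_def less_imp_le)
      show "eventually (\<lambda>x. exp x / F1 x \<le> 1/k * (exp x * (k*(x-theta)+1) / exp (((k*(x-theta))^2 - 1)/2))) at_top"
        using eventually_ge_at_top[of "theta + 1/k"]
      proof eventually_elim
        case (elim x)
        have p: "k*(x-theta) + 1 > 0"
        proof -
          have "k*(x-theta) \<ge> k * (1/k)" using elim k by (intro mult_left_mono) auto
          thus ?thesis using k by simp
        qed
        have "exp x / F1 x \<le> exp x / (k * (exp (((k*(x-theta))^2 - 1)/2) / (k*(x-theta) + 1)))"
          using lowF1[OF elim] p k gI_pos[of "a+1" "k*(x-theta)"] a by (intro divide_left_mono) (auto simp: F1_def)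
        thus ?case by simp
      qed
    qed
  next
    show "filterlim G at_top at_bot"
    proof (rule filterlim_at_top_mono[OF lim2])
      show "eventually (\<lambda>x. exp (((k*(theta-x))^2 - 1)/2) / (k*(theta-x) + 1) \<le> G x) at_bot"
        using eventually_le_at_bot[of "theta - 1/k"] by eventually_elim (rule lowG)
    qed
  qed
  have psi_eq: "OU_psi mu sig theta r = ou.psi"
    by (rule ext) (unfold ou.psi_def, simp add: OU_psi_def OU_F_def OU_G_def F_def G_def gI_def a_def k_def)
  have H_eq: "H = ou.HH"
    unfolding H_def by (rule ext) (unfold OU_H_def ou.HH_def ou.phi_def ou.hh_def h_s_def psi_eq, simp add: G_def OU_G_def gI_def a_def k_def)
  define xs where "xs = x_s mu sig theta r c"
  have Lx_eq: "ou.Lx x = 2/sig^2 * exp x * f_s mu sig theta r c x" for x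
  proof -
    have e: "exp x * exp (-x) = 1" by (simp add: exp_minus)
    show ?thesis unfolding ou.Lx_def ou.hh_def
      unfolding f_s_def k2 a1
      using mu sig by (simp add: field_simps exp_minus)
  qed
  have fs0: "f_s mu sig theta r c xs = 0" unfolding xs_def by (rule fs_root[OF mu r c])
  have Lge: "ou.Lx x \<ge> 0" if "x \<le> xs" for x
  proof -
    have "f_s mu sig theta r c x \<ge> 0"
      using fs0 fs_decr[OF mu r c, of x xs, where sig=sig and theta=theta] that by (cases "x = xs") auto
    thus ?thesis unfolding Lx_eq by simp
  qed
  have Lle: "ou.Lx x \<le> 0" if "x \<ge> xs" for x
  proof -
    have "f_s mu sig theta r c x \<le> 0"
      using fs0 fs_decr[OF mu r c, of xs x, where sig=sig and theta=theta] that by (cases "x = xs") auto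
    hence "2/sig^2 * exp x * f_s mu sig theta r c x \<le> 0"
      by (intro mult_nonneg_nonpos) auto
    thus ?thesis unfolding Lx_eq .
  qed
  have z0: "z0 = ou.psi (ln c)" by (simp add: z0_def psi_eq)
  have zs: "zs = ou.psi xs" by (simp add: zs_def psi_eq xs_def)
  have diff: "\<forall>z>0. H differentiable (at z) \<and> deriv H differentiable (at z)"
    unfolding H_eq real_differentiable_def using ou.HH_deriv ou.derivHH_deriv by blast
  show ?thesis
    unfolding z0 zs
    using ou.HH_cont diff ou.HH0 ou.HH_neg ou.HH_posv ou.HH_mono ou.derivHH_top
      ou.HH_convex[OF Lge] ou.HH_concave[OF Lle]
    unfolding H_eq by blast
qed

end
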